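(* Let $q$ be a prime power, $u,v$ non-zero in $\mathbb{F}_q$, and write $\mathrm{Rad}(q-1)=k\,p_1\cdots p_s$ with $k$ a divisor and $p_1,\ldots,p_s$ distinct primes. Let $N_{q-1}=N(q-1,q-1,q-1,q-1)$ and $N_{k,q-1}=N(k,k,k,q-1)$. Then $$N_{q-1}\geq \sum_{i=1}^s\{N(p_ik,k,k,q-1)+N(k,p_ik,k,q-1)+N(k,k,p_ik,q-1)\}-(3s-1)N_{k,q-1}.$$ Hence, with $\delta_3=1-3\sum_{i=1}^s 1/p_i$, $$N_{q-1}\geq \sum_{i=1}^s\{[N(p_ik,k,k,q-1)-\theta(p_i)N_{k,q-1}]+[N(k,p_ik,k,q-1)-\theta(p_i)N_{k,q-1}]+[N(k,k,p_ik,q-1)-\theta(p_i)N_{k,q-1}]\}+\delta_3N_{k,q-1}.$$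
   Context: $\mathrm{Rad}(m)$ is the product of the distinct primes dividing $m$; $\theta(m)=\phi(m)/m$. For a divisor $e$ of $q-1$, a non-zero $a\in\mathbb{F}_q$ is $e$-free if $a=b^d$ with $b\in\mathbb{F}_q$, $d\mid e$ implies $d=1$. For divisors $e_1,\ldots,e_4$ of $q-1$, $N(e_1,e_2,e_3,e_4)$ is the number of pairs of non-zero $a,b\in\mathbb{F}_q$ such that $a$, $b$, $ua+vb$, $va^{-1}+ub^{-1}$ are (non-zero and) respectively $e_1$-, $e_2$-, $e_3$-, $e_4$-free. *)

theory Defs
  imports "HOL-Number_Theory.Number_Theory"
begin

definition Rad :: "nat \<Rightarrow> nat" where
  "Rad m = (\<Prod>p\<in>prime_factors m. p)"

definition theta :: "nat \<Rightarrow> real" where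
  "theta m = real (totient m) / real m"

definition efree :: "nat \<Rightarrow> 'a::{finite,field} \<Rightarrow> bool" where
  "efree e a \<longleftrightarrow> a \<noteq> 0 \<and> (\<forall>(b::'a) (d::nat). d dvd e \<and> a = b ^ d \<longrightarrow> d = 1)"

definition Ncount :: "'a::{finite,field} \<Rightarrow> 'a \<Rightarrow> nat \<Rightarrow> nat \<Rightarrow> nat \<Rightarrow> nat \<Rightarrow> nat" where
  "Ncount u v e1 e2 e3 e4 = card {(a :: 'a, b :: 'a). a \<noteq> 0 \<and> b \<noteq> 0 \<and>
      efree e1 a \<and> efree e2 b \<and> efree e3 (u * a + v * b) \<and>
      efree e4 (v * inverse a + u * inverse b)}"

end

theory Submission
  imports Defs
begin

lemma efree_prime_iff:
  fixes a :: "'a::{finite,field}"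
  assumes "e \<noteq> 0"
  shows "efree e a \<longleftrightarrow> a \<noteq> 0 \<and> (\<forall>r b. prime r \<and> r dvd e \<longrightarrow> a \<noteq> b ^ r)"
proof
  assume h: "efree e a"
  show "a \<noteq> 0 \<and> (\<forall>r b. prime r \<and> r dvd e \<longrightarrow> a \<noteq> b ^ r)"
    using h unfolding efree_def by (metis not_prime_1)
next
  assume h: "a \<noteq> 0 \<and> (\<forall>r b. prime r \<and> r dvd e \<longrightarrow> a \<noteq> b ^ r)"
  show "efree e a" unfolding efree_def
  proof (intro conjI allI impI)
    show "a \<noteq> 0" using h by simp
    fix b :: 'a and d :: nat assume hd: "d dvd e \<and> a = b ^ d"
    show "d = 1"
    proof (rule ccontr)
      assume "d \<noteq> 1"
      then obtain r where r: "prime r" "r dvd d" using prime_factor_nat by blast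
      then obtain c where c: "d = r * c" by (auto elim: dvdE)
      have "a = (b ^ c) ^ r" using hd c by (simp add: power_mult mult.commute)
      moreover have "r dvd e" using r hd dvd_trans by blast
      ultimately show False using h r by blast
    qed
  qed
qed

lemma prime_dvd_Rad:
  assumes "m \<noteq> 0" "prime (r::nat)"
  shows "r dvd Rad m \<longleftrightarrow> r dvd m"
proof
  assume "r dvd Rad m"
  then obtain x where "x \<in> prime_factors m" "r dvd x"
    using assms unfolding Rad_def by (auto simp: prime_dvd_prod_iff)
  then show "r dvd m"
    using assms by (metis dvd_trans in_prime_factors_iff primes_dvd_imp_eq)
next
  assume "r dvd m"
  then have "r \<in> prime_factors m" using assms by (simp add: in_prime_factors_iff)
  then show "r dvd Rad m" unfolding Rad_def
    using dvd_prodI[of "prime_factors m" r "\<lambda>x. x"] by simp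
qed

lemma Rad_nz: "Rad m \<noteq> 0"
  unfolding Rad_def by (auto simp: in_prime_factors_iff)

lemma efree_split:
  fixes x :: "'a::{finite,field}"
  assumes "E \<noteq> 0" "k \<noteq> 0" "\<forall>i\<in>I. prime (p i)"
    and "\<forall>r. prime r \<longrightarrow> (r dvd E \<longleftrightarrow> r dvd k \<or> (\<exists>i\<in>I. r = p i))"
  shows "efree E x \<longleftrightarrow> efree k x \<and> (\<forall>i\<in>I. efree (p i * k) x)"
proof -
  have nz: "\<forall>i\<in>I. p i * k \<noteq> 0" using assms(2,3) by (auto simp: prime_gt_0_nat)
  have pd: "\<And>r i. i \<in> I \<Longrightarrow> prime r \<Longrightarrow> r dvd p i * k \<longleftrightarrow> r = p i \<or> r dvd k"
    using assms(3) by (auto simp: prime_dvd_mult_iff dest: primes_dvd_imp_eq)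
  show ?thesis
    using assms(1,2,4) nz pd
    by (simp add: efree_prime_iff) blast
qed

definition NS :: "'a::{finite,field} \<Rightarrow> 'a \<Rightarrow> nat \<Rightarrow> nat \<Rightarrow> nat \<Rightarrow> nat \<Rightarrow> ('a \<times> 'a) set" where
  "NS u v e1 e2 e3 e4 = {(a :: 'a, b :: 'a). a \<noteq> 0 \<and> b \<noteq> 0 \<and>
      efree e1 a \<and> efree e2 b \<and> efree e3 (u * a + v * b) \<and>
      efree e4 (v * inverse a + u * inverse b)}"

lemma sieve:
  assumes "finite (S0 :: 'b set)" "finite J" "\<forall>j\<in>J. A j \<subseteq> S0"
  shows "real (card (S0 \<inter> \<Inter>(A ` J))) \<ge> (\<Sum>j\<in>J. real (card (A j))) - (real (card J) - 1) * real (card S0)"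
  using assms(2,3)
proof (induction J rule: finite_induct)
  case empty
  then show ?case by simp
next
  case (insert x J)
  let ?T = "S0 \<inter> \<Inter>(A ` J)"
  have fT1: "finite ?T" using assms(1) by simp
  have fT2: "finite (A x)" by (rule finite_subset[OF _ assms(1)]) (use insert.prems in simp)
  note fT = fT1 fT2
  have e1: "card (?T \<union> A x) + card (?T \<inter> A x) = card ?T + card (A x)"
    using card_Un_Int[OF fT1 fT2] by linarith
  have e2: "card (?T \<union> A x) \<le> card S0"
    using insert.prems assms(1) by (intro card_mono) auto
  have e3: "S0 \<inter> \<Inter>(A ` insert x J) = ?T \<inter> A x" by auto
  have "card ?T + card (A x) \<le> card (S0 \<inter> \<Inter>(A ` insert x J)) + card S0"
    unfolding e3 using e1 e2 by linarith
  then have r1: "real (card ?T) + real (card (A x)) \<le> real (card (S0 \<inter> \<Inter>(A ` insert x J))) + real (card S0)"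
    by (simp only: of_nat_add[symmetric] of_nat_le_iff)
  have r2: "real (card ?T) \<ge> (\<Sum>j\<in>J. real (card (A j))) - (real (card J) - 1) * real (card S0)"
    using insert.IH insert.prems by simp
  have r3: "(\<Sum>j\<in>insert x J. real (card (A j))) = real (card (A x)) + (\<Sum>j\<in>J. real (card (A j)))"
    using insert by simp
  have r4: "(real (card (insert x J)) - 1) * real (card S0) = (real (card J) - 1) * real (card S0) + real (card S0)"
    using insert by (simp add: algebra_simps)
  show ?case using r1 r2 r3 r4 by linarith
qed

theorem lemma5p2:
  fixes u v :: "'a::{finite,field}"
    and q k s :: nat and p :: "nat \<Rightarrow> nat"
  assumes "q = card (UNIV :: 'a set)"
    and "u \<noteq> 0" and "v \<noteq> 0"
    and "\<forall>i\<in>{1..s}. prime (p i)"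
    and "inj_on p {1..s}"
    and "Rad (q - 1) = k * (\<Prod>i=1..s. p i)"
  shows "(real (Ncount u v (q-1) (q-1) (q-1) (q-1)) \<ge>
           (\<Sum>i=1..s. real (Ncount u v (p i * k) k k (q-1)) + real (Ncount u v k (p i * k) k (q-1))
                      + real (Ncount u v k k (p i * k) (q-1)))
           - (3 * real s - 1) * real (Ncount u v k k k (q-1)))
       \<and> (real (Ncount u v (q-1) (q-1) (q-1) (q-1)) \<ge>
           (\<Sum>i=1..s.
              (real (Ncount u v (p i * k) k k (q-1)) - theta (p i) * real (Ncount u v k k k (q-1)))
            + (real (Ncount u v k (p i * k) k (q-1)) - theta (p i) * real (Ncount u v k k k (q-1)))
            + (real (Ncount u v k k (p i * k) (q-1)) - theta (p i) * real (Ncount u v k k k (q-1))))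
           + (1 - 3 * (\<Sum>i=1..s. 1 / real (p i))) * real (Ncount u v k k k (q-1)))"
proof -
  define E where "E = q - 1"
  have "card {0::'a, 1} \<le> card (UNIV :: 'a set)" by (rule card_mono) auto
  then have "q \<ge> 2" using assms(1) by simp
  then have E0: "E \<noteq> 0" unfolding E_def by simp
  have k0: "k \<noteq> 0" using Rad_nz[of "q-1"] assms(6) by auto
  have rdiv: "\<forall>r. prime r \<longrightarrow> (r dvd E \<longleftrightarrow> r dvd k \<or> (\<exists>i\<in>{1..s}. r = p i))"
  proof (intro allI impI)
    fix r :: nat assume r: "prime r"
    have "r dvd E \<longleftrightarrow> r dvd k * (\<Prod>i=1..s. p i)"
      using prime_dvd_Rad[OF E0 r] assms(6) unfolding E_def by simp
    also have "\<dots> \<longleftrightarrow> r dvd k \<or> (\<exists>i\<in>{1..s}. r dvd p i)"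
      using r by (simp add: prime_dvd_mult_iff prime_dvd_prod_iff)
    also have "\<dots> \<longleftrightarrow> r dvd k \<or> (\<exists>i\<in>{1..s}. r = p i)"
    proof -
      have "r dvd p i \<longleftrightarrow> r = p i" if "i \<in> {1..s}" for i
      proof
        assume "r dvd p i" then show "r = p i" using primes_dvd_imp_eq[OF r] assms(4) that by auto
      next
        assume "r = p i" then show "r dvd p i" by simp
      qed
      then show ?thesis by blast
    qed
    finally show "r dvd E \<longleftrightarrow> r dvd k \<or> (\<exists>i\<in>{1..s}. r = p i)" .
  qed
  have split: "\<And>x::'a. efree E x \<longleftrightarrow> efree k x \<and> (\<forall>i\<in>{1..s}. efree (p i * k) x)"
    by (rule efree_split[OF E0 k0 assms(4) rdiv])
  have mono: "\<And>i x::'a. efree (p i * k) x \<Longrightarrow> efree k x"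
    unfolding efree_def using dvd_mult by blast
  define J where "J = {1..s} \<times> {0::nat, 1, 2}"
  define A where "A = (\<lambda>(i::nat, j::nat). NS u v (if j = 0 then p i * k else k) (if j = 1 then p i * k else k)
                                      (if j = 2 then p i * k else k) E)"
  define S0 where "S0 = NS u v k k k E"
  have NC: "\<And>e1 e2 e3 e4. Ncount u v e1 e2 e3 e4 = card (NS u v e1 e2 e3 e4)"
    unfolding Ncount_def NS_def by simp
  have sub: "\<forall>j\<in>J. A j \<subseteq> S0"
    unfolding J_def A_def S0_def NS_def using mono by auto
  have eqset: "NS u v E E E E = S0 \<inter> \<Inter>(A ` J)"
  proof (rule Set.set_eqI)
    fix z :: "'a \<times> 'a"
    obtain a b where z: "z = (a, b)" by (cases z)
    define w where "w = v * inverse a + u * inverse b"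
    define c where "c = u * a + v * b"
    have memA: "\<And>i j. (a, b) \<in> A (i, j) \<longleftrightarrow> a \<noteq> 0 \<and> b \<noteq> 0 \<and>
        efree (if j = 0 then p i * k else k) a \<and> efree (if j = 1 then p i * k else k) b \<and>
        efree (if j = 2 then p i * k else k) c \<and> efree E w"
      unfolding A_def NS_def c_def w_def by simp
    have "z \<in> \<Inter>(A ` J) \<longleftrightarrow> (\<forall>i\<in>{1..s}. (a, b) \<in> A (i, 0) \<and> (a, b) \<in> A (i, 1) \<and> (a, b) \<in> A (i, 2))"
      unfolding J_def z by blast
    also have "\<dots> \<longleftrightarrow> (\<forall>i\<in>{1..s}. a \<noteq> 0 \<and> b \<noteq> 0 \<and> efree E w \<and>
          efree (p i * k) a \<and> efree (p i * k) b \<and> efree (p i * k) c \<and> efree k a \<and> efree k b \<and> efree k c)"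
      unfolding memA using mono by auto
    finally have I: "z \<in> \<Inter>(A ` J) \<longleftrightarrow> (\<forall>i\<in>{1..s}. a \<noteq> 0 \<and> b \<noteq> 0 \<and> efree E w \<and>
          efree (p i * k) a \<and> efree (p i * k) b \<and> efree (p i * k) c \<and> efree k a \<and> efree k b \<and> efree k c)" .
    have S: "z \<in> S0 \<longleftrightarrow> a \<noteq> 0 \<and> b \<noteq> 0 \<and> efree k a \<and> efree k b \<and> efree k c \<and> efree E w"
      unfolding S0_def NS_def z c_def w_def by simp
    have N: "z \<in> NS u v E E E E \<longleftrightarrow> a \<noteq> 0 \<and> b \<noteq> 0 \<and> efree E a \<and> efree E b \<and> efree E c \<and> efree E w"
      unfolding NS_def z c_def w_def by simp
    show "z \<in> NS u v E E E E \<longleftrightarrow> z \<in> S0 \<inter> \<Inter>(A ` J)"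
      unfolding N Int_iff S I split[of a] split[of b] split[of c] by blast
  qed
  have cJ: "card J = 3 * s" unfolding J_def by (simp add: card_cartesian_product)
  have sumJ: "(\<Sum>j\<in>J. real (card (A j))) =
     (\<Sum>i=1..s. real (Ncount u v (p i * k) k k E) + real (Ncount u v k (p i * k) k E)
                      + real (Ncount u v k k (p i * k) E))"
  proof -
    have s1: "(\<Sum>j\<in>J. real (card (A j))) = (\<Sum>i\<in>{1..s}. \<Sum>j\<in>{0::nat,1,2}. real (card (A (i, j))))"
      unfolding J_def sum.cartesian_product by (rule sum.cong) auto
    show ?thesis unfolding s1 by (simp add: A_def NC add.assoc)
  qed
  have part1: "real (Ncount u v E E E E) \<ge>
           (\<Sum>i=1..s. real (Ncount u v (p i * k) k k E) + real (Ncount u v k (p i * k) k E)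
                      + real (Ncount u v k k (p i * k) E))
           - (3 * real s - 1) * real (Ncount u v k k k E)"
    using sieve[of S0 J A] sub cJ sumJ eqset
    by (simp add: NC S0_def J_def)
  have th: "\<And>i. i \<in> {1..s} \<Longrightarrow> theta (p i) = 1 - 1 / real (p i)"
    using assms(4) by (auto simp: theta_def totient_prime prime_gt_0_nat of_nat_diff field_simps)
  let ?N = "real (Ncount u v k k k E)"
  have "(\<Sum>i=1..s.
              (real (Ncount u v (p i * k) k k E) - theta (p i) * ?N)
            + (real (Ncount u v k (p i * k) k E) - theta (p i) * ?N)
            + (real (Ncount u v k k (p i * k) E) - theta (p i) * ?N))
           + (1 - 3 * (\<Sum>i=1..s. 1 / real (p i))) * ?N
      = (\<Sum>i=1..s. (real (Ncount u v (p i * k) k k E) + real (Ncount u v k (p i * k) k E)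
                      + real (Ncount u v k k (p i * k) E)) - 3 * ?N + 3 * (1 / real (p i)) * ?N)
           + ?N - 3 * (\<Sum>i=1..s. 1 / real (p i)) * ?N"
  proof -
    have "(\<Sum>i=1..s.
              (real (Ncount u v (p i * k) k k E) - theta (p i) * ?N)
            + (real (Ncount u v k (p i * k) k E) - theta (p i) * ?N)
            + (real (Ncount u v k k (p i * k) E) - theta (p i) * ?N))
       = (\<Sum>i=1..s. (real (Ncount u v (p i * k) k k E) + real (Ncount u v k (p i * k) k E)
                      + real (Ncount u v k k (p i * k) E)) - 3 * ?N + 3 * (1 / real (p i)) * ?N)"
      by (rule sum.cong[OF refl]) (simp add: th algebra_simps)
    then show ?thesis by (simp add: algebra_simps)
  qed
  also have "\<dots> = (\<Sum>i=1..s. real (Ncount u v (p i * k) k k E) + real (Ncount u v k (p i * k) k E)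
                      + real (Ncount u v k k (p i * k) E))
           - (3 * real s - 1) * ?N"
  proof -
    have h: "(\<Sum>i=1..s. 3 * (1 / real (p i)) * ?N) = 3 * (\<Sum>i=1..s. 1 / real (p i)) * ?N"
      by (simp only: sum_distrib_right[symmetric] sum_distrib_left[symmetric])
    show ?thesis unfolding sum.distrib sum_subtractf h by (simp add: algebra_simps)
  qed
  finally show ?thesis using part1 unfolding E_def by simp
qed

end
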